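(* Let $l\ge3$ be an odd integer and let $(A,M)$ be any NIM-rep of the fusion ring $\mathrm{Gr}((A_1,l)_{\frac12})$. Then $(V_{l-1}^2\vartriangleright m_p,m_p)\le3$ for all $m_p\in M$.
   Context: For odd $l\ge3$, $\mathrm{Gr}((A_1,l)_{\frac12})$ is the commutative fusion ring with basis $\{V_0,V_2,V_4,\dots,V_{l-1}\}$ (unit $V_0$, every basis element self-dual) and multiplication $V_iV_j=\sum_k V_k$, the sum over all $k$ with $|i-j|\le k\le\min(i+j,2l-i-j)$ and $k\equiv i+j \pmod 2$. A NIM-rep of a fusion ring $(R,B)$ is a nonzero left $R$-module $A$, free over $\mathbb{Z}$ with a fixed basis $M$, such that each $b\vartriangleright m$ is a non-negative integer combination of elements of $M$ and $(b\vartriangleright m,m')=(m,b^*\vartriangleright m')$ for the symmetric bilinear form $(-,-)$ making $M$ orthonormal. *)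

theory Defs
  imports Main
begin

text \<open>The fusion ring Gr((A_1,l)_{1/2}) for odd l: basis V_k, k even, 0 <= k <= l-1.
  Ring elements are coefficient functions nat => int (coefficient of V_k at k).\<close>

definition fr_basis :: "nat \<Rightarrow> nat set" where
  "fr_basis l = {k. even k \<and> k \<le> l - 1}"

text \<open>Structure constant: coefficient of V_k in V_i V_j.\<close>
definition fus :: "nat \<Rightarrow> nat \<Rightarrow> nat \<Rightarrow> nat \<Rightarrow> int" where
  "fus l i j k = (if (if i \<le> j then j - i else i - j) \<le> k \<and> k \<le> min (i + j) (2 * l - (i + j))
                     \<and> k mod 2 = (i + j) mod 2 then 1 else 0)"

definition fr_mult_basis :: "nat \<Rightarrow> nat \<Rightarrow> nat \<Rightarrow> (nat \<Rightarrow> int)" where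
  "fr_mult_basis l i j = (\<lambda>k. fus l i j k)"

text \<open>Module elements: finitely supported functions 'm => int (coordinates w.r.t. basis M).
  N i m m' is the (non-negative integer) coefficient of m' in V_i |> m.\<close>

definition delta :: "'m \<Rightarrow> ('m \<Rightarrow> int)" where
  "delta m = (\<lambda>m'. if m' = m then 1 else 0)"

definition bact :: "(nat \<Rightarrow> 'm \<Rightarrow> 'm \<Rightarrow> nat) \<Rightarrow> nat \<Rightarrow> ('m \<Rightarrow> int) \<Rightarrow> ('m \<Rightarrow> int)" where
  "bact N i v = (\<lambda>m'. \<Sum>m\<in>{m. v m \<noteq> 0}. v m * int (N i m m'))"

definition ract :: "nat \<Rightarrow> (nat \<Rightarrow> 'm \<Rightarrow> 'm \<Rightarrow> nat) \<Rightarrow> (nat \<Rightarrow> int) \<Rightarrow> ('m \<Rightarrow> int) \<Rightarrow> ('m \<Rightarrow> int)" where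
  "ract l N x v = (\<lambda>m'. \<Sum>i\<in>fr_basis l. x i * bact N i v m')"

definition form :: "'m set \<Rightarrow> ('m \<Rightarrow> int) \<Rightarrow> ('m \<Rightarrow> int) \<Rightarrow> int" where
  "form M u v = (\<Sum>m\<in>{m\<in>M. u m \<noteq> 0}. u m * v m)"

text \<open>The module is the free Z-module on M;
  the action is determined by the basis actions N, required to be non-negative integer
  valued, finitely supported, unital, associative, and adjoint (all V_i are self-dual).\<close>
definition is_NIM_rep :: "nat \<Rightarrow> 'm set \<Rightarrow> (nat \<Rightarrow> 'm \<Rightarrow> 'm \<Rightarrow> nat) \<Rightarrow> bool" where
  "is_NIM_rep l M N \<longleftrightarrow>
     M \<noteq> {} \<and>
     (\<forall>i m m'. N i m m' \<noteq> 0 \<longrightarrow> i \<in> fr_basis l \<and> m \<in> M \<and> m' \<in> M) \<and>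
     (\<forall>i m. finite {m'. N i m m' \<noteq> 0}) \<and>
     (\<forall>m\<in>M. bact N 0 (delta m) = delta m) \<and>
     (\<forall>i\<in>fr_basis l. \<forall>j\<in>fr_basis l. \<forall>m\<in>M.
        bact N i (bact N j (delta m)) = ract l N (fr_mult_basis l i j) (delta m)) \<and>
     (\<forall>i\<in>fr_basis l. \<forall>m\<in>M. \<forall>m'\<in>M.
        form M (bact N i (delta m)) (delta m') = form M (delta m) (bact N i (delta m')))"

end

theory Submission imports Defs begin
lemma fin_basis: "finite (fr_basis l)"
  by (rule finite_subset[of _ "{..l}"]) (auto simp: fr_basis_def)

lemma fus_char:
  assumes "l = 2*a+1" "i = 2*b" "k = 2*c" "b \<le> a" "c \<le> a"
  shows "fus l (l-1) i k = of_bool (b = a - c \<or> (c \<noteq> 0 \<and> b = a + 1 - c))"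
proof -
  have P: "((if l - 1 \<le> i then i - (l - 1) else (l - 1) - i) \<le> k \<and> k \<le> min ((l-1) + i) (2 * l - ((l-1) + i))
                     \<and> k mod 2 = ((l-1) + i) mod 2) = (b = a - c \<or> (c \<noteq> 0 \<and> b = a + 1 - c))"
    using assms(4,5) unfolding assms(1-3) by (simp add: min_def; arith)
  show ?thesis unfolding fus_def
    by (simp only: P) simp
qed

lemma fus_sum:
  assumes "odd l" "l \<ge> 3" "k \<in> fr_basis l"
  shows "(\<Sum>i\<in>fr_basis l. fus l (l-1) i k) = (if k = 0 then 1 else 2)"
proof -
  obtain a where a: "l = 2*a+1" using assms by (auto elim: oddE)
  obtain c where c: "k = 2*c" "c \<le> a" using assms a by (auto simp: fr_basis_def elim!: evenE)
  define S where "S = (if k = 0 then {l-1} else {l-1-k, l+1-k})"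
  have fi: "fus l (l-1) i k = of_bool (i \<in> S)" if iB: "i \<in> fr_basis l" for i
  proof -
    obtain b where b: "i = 2*b" "b \<le> a" using iB a by (auto simp: fr_basis_def elim!: evenE)
    have "(b = a - c \<or> (c \<noteq> 0 \<and> b = a + 1 - c)) = (i \<in> S)"
      unfolding S_def using a b c by auto
    then show ?thesis using fus_char[OF a b(1) c(1) b(2) c(2)] by simp
  qed
  have "(\<Sum>i\<in>fr_basis l. fus l (l-1) i k) = (\<Sum>i\<in>fr_basis l. of_bool (i \<in> S))"
    using fi by (rule sum.cong[OF refl])
  also have "\<dots> = int (card (fr_basis l \<inter> {i. i \<in> S}))"
    by (subst sum_of_bool_eq) (auto simp: fin_basis)
  also have "fr_basis l \<inter> {i. i \<in> S} = S"
    using a c unfolding S_def fr_basis_def by auto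
  finally show ?thesis using a c unfolding S_def by auto
qed

lemma bact_delta: "bact N i (delta m) = (\<lambda>m'. int (N i m m'))"
proof -
  have "{x. delta m x \<noteq> 0} = {m}" by (auto simp: delta_def)
  then show ?thesis unfolding bact_def by (simp add: delta_def)
qed

lemma form_delta_right:
  "form M u (delta m') = 0 \<or> form M u (delta m') = u m'"
proof (cases "finite {m\<in>M. u m \<noteq> 0}")
  case True
  have "form M u (delta m') = (\<Sum>m\<in>{m\<in>M. u m \<noteq> 0}. if m' = m then u m else 0)"
    unfolding form_def delta_def by (rule sum.cong) auto
  also have "\<dots> = (if m' \<in> {m\<in>M. u m \<noteq> 0} then u m' else 0)"
    using True by (rule sum.delta')
  finally show ?thesis by auto
next
  case False
  then show ?thesis unfolding form_def by simp
qed

lemma form_delta_left: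
  assumes "m \<in> M" shows "form M (delta m) v = v m"
proof -
  have "{x\<in>M. delta m x \<noteq> 0} = {m}" using assms by (auto simp: delta_def)
  then show ?thesis unfolding form_def by (simp add: delta_def)
qed

lemma final_arith:
  fixes W n t :: int
  assumes "W \<ge> 0" "n \<ge> 0" "t \<ge> 0" "4*W - 2 \<ge> W*(2*n + t)"
  shows "n*n + t \<le> 3"
proof -
  have "2*n + t \<le> 3"
  proof (rule ccontr)
    assume "\<not> ?thesis"
    then have "W * 4 \<le> W*(2*n+t)" using assms(1) by (intro mult_left_mono) auto
    then show False using assms by linarith
  qed
  then have "n = 0 \<or> n = 1" using assms by linarith
  then show ?thesis using \<open>2*n + t \<le> 3\<close> by auto
qed

theorem lemma3p33:
  fixes l :: nat and M :: "'m set" and N :: "nat \<Rightarrow> 'm \<Rightarrow> 'm \<Rightarrow> nat"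
  assumes "odd l" and "l \<ge> 3"
    and "is_NIM_rep l M N"
    and "mp \<in> M"
  shows "form M (ract l N (fr_mult_basis l (l - 1) (l - 1)) (delta mp)) (delta mp) \<le> 3"
proof -
  define B where "B = fr_basis l"
  define X where "X = l - 1"
  have H1: "\<And>i m m'. N i m m' \<noteq> 0 \<Longrightarrow> i \<in> B \<and> m \<in> M \<and> m' \<in> M"
   and H2: "\<And>i m. finite {m'. N i m m' \<noteq> 0}"
   and H3: "\<And>m. m \<in> M \<Longrightarrow> bact N 0 (delta m) = delta m"
   and H4: "\<And>i j m. i \<in> B \<Longrightarrow> j \<in> B \<Longrightarrow> m \<in> M \<Longrightarrow>
        bact N i (bact N j (delta m)) = ract l N (fr_mult_basis l i j) (delta m)"
   and H5: "\<And>i m m'. i \<in> B \<Longrightarrow> m \<in> M \<Longrightarrow> m' \<in> M \<Longrightarrow>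
        form M (bact N i (delta m)) (delta m') = form M (delta m) (bact N i (delta m'))"
    using assms(3) unfolding is_NIM_rep_def B_def by blast+
  have finB: "finite B" unfolding B_def by (rule fin_basis)
  have XB: "X \<in> B" and zB: "0 \<in> B" using assms(1) unfolding B_def X_def fr_basis_def by auto
  have sym: "N i m m' = N i m' m" for i m m'
  proof (cases "N i m m' = 0 \<and> N i m' m = 0")
    case True then show ?thesis by simp
  next
    case False
    then have iB: "i \<in> B" and mM: "m \<in> M" "m' \<in> M" using H1 by blast+
    have fin: "finite {x\<in>M. int (N i m x) \<noteq> 0}"
      by (rule finite_subset[OF _ H2[of i m]]) auto
    have "form M (bact N i (delta m)) (delta m') = int (N i m m')"
    proof -
      have "form M (\<lambda>x. int (N i m x)) (delta m') = (\<Sum>x\<in>{x\<in>M. int (N i m x) \<noteq> 0}. if m' = x then int (N i m x) else 0)"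
        unfolding form_def delta_def by (rule sum.cong) auto
      also have "\<dots> = int (N i m m')" using fin mM by (subst sum.delta') auto
      finally show ?thesis by (simp add: bact_delta)
    qed
    moreover have "form M (delta m) (bact N i (delta m')) = int (N i m' m)"
      using mM by (simp add: form_delta_left bact_delta)
    ultimately show ?thesis using H5[OF iB mM] by simp
  qed
  define F where "F = {mp} \<union> (\<Union>i\<in>B. {y. N i mp y \<noteq> 0})"
  have finF: "finite F" unfolding F_def using finB H2 by auto
  have suppF: "{y. N i mp y \<noteq> 0} \<subseteq> F" if "i \<in> B" for i using that unfolding F_def by auto
  have mpF: "mp \<in> F" unfolding F_def by auto
  define n where "n y = int (N X mp y)" for y
  define w where "w y = (\<Sum>i\<in>B. int (N i mp y))" for y
  have N0: "int (N 0 mp z) = (if z = mp then 1 else 0)" for z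
    using fun_cong[OF H3[OF assms(4)], of z] unfolding bact_delta by (simp add: delta_def)
  have A: "(\<Sum>y\<in>F. int (N i mp y) * int (N j y z)) = (\<Sum>k\<in>B. fus l j i k * int (N k mp z))"
    if iB: "i \<in> B" and jB: "j \<in> B" for i j z
  proof -
    have "(\<Sum>y\<in>F. int (N i mp y) * int (N j y z)) = (\<Sum>y\<in>{y. N i mp y \<noteq> 0}. int (N i mp y) * int (N j y z))"
      by (rule sum.mono_neutral_right[OF finF suppF[OF iB]]) auto
    also have "\<dots> = bact N j (bact N i (delta mp)) z"
      unfolding bact_delta by (simp add: bact_def)
    also have "\<dots> = ract l N (fr_mult_basis l j i) (delta mp) z"
      using H4[OF jB iB assms(4)] by simp
    also have "\<dots> = (\<Sum>k\<in>B. fus l j i k * int (N k mp z))"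
      by (simp add: ract_def fr_mult_basis_def bact_delta B_def)
    finally show ?thesis .
  qed
  have E: "(\<Sum>y\<in>F. w y * int (N X y z)) = 2 * w z - (if z = mp then 1 else 0)" for z
  proof -
    have "(\<Sum>y\<in>F. w y * int (N X y z)) = (\<Sum>i\<in>B. \<Sum>y\<in>F. int (N i mp y) * int (N X y z))"
      unfolding w_def sum_distrib_right by (rule sum.swap)
    also have "\<dots> = (\<Sum>i\<in>B. \<Sum>k\<in>B. fus l X i k * int (N k mp z))"
      using A XB by (intro sum.cong) auto
    also have "\<dots> = (\<Sum>k\<in>B. (\<Sum>i\<in>B. fus l X i k) * int (N k mp z))"
      unfolding sum_distrib_right mult.assoc by (rule sum.swap)
    also have "\<dots> = (\<Sum>k\<in>B. 2 * int (N k mp z) - of_bool (k = 0) * int (N k mp z))"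
      using fus_sum[OF assms(1,2)] unfolding B_def X_def by (intro sum.cong) auto
    also have "\<dots> = 2 * w z - int (N 0 mp z)"
      unfolding w_def using finB zB by (simp add: sum_subtractf sum_distrib_left)
    finally show ?thesis using N0 by simp
  qed
  have wnn: "w y \<ge> 0" for y unfolding w_def by (simp add: sum_nonneg)
  have nnn: "n y \<ge> 0" for y unfolding n_def by simp
  define W where "W = w mp"
  have Emp: "(\<Sum>y\<in>F. w y * n y) = 2 * W - 1"
    using E[of mp] unfolding n_def W_def by (simp add: sym[of X _ mp])
  have Ez: "W * n z \<le> 2 * w z" if "z \<in> F" "z \<noteq> mp" for z
  proof -
    have "w mp * int (N X mp z) \<le> (\<Sum>y\<in>F. w y * int (N X y z))"
      by (rule member_le_sum[OF mpF]) (auto intro: wnn finF mult_nonneg_nonneg)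
    then show ?thesis using E[of z] that unfolding W_def n_def by simp
  qed
  define t where "t = (\<Sum>y\<in>F-{mp}. n y * n y)"
  have tnn: "t \<ge> 0" unfolding t_def by (simp add: sum_nonneg)
  have "2 * (2 * W - 1) = (\<Sum>y\<in>F. 2 * w y * n y)"
    using Emp by (simp add: sum_distrib_left[symmetric] mult.assoc)
  also have "\<dots> = 2 * W * n mp + (\<Sum>y\<in>F-{mp}. 2 * w y * n y)"
    using finF mpF unfolding W_def by (simp add: sum.remove)
  also have "\<dots> \<ge> 2 * W * n mp + (\<Sum>y\<in>F-{mp}. W * n y * n y)"
    using Ez nnn by (intro add_left_mono sum_mono mult_right_mono) auto
  finally have ineq: "4 * W - 2 \<ge> W * (2 * n mp + t)"
    unfolding t_def by (simp add: algebra_simps sum_distrib_left)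
  have target: "ract l N (fr_mult_basis l (l - 1) (l - 1)) (delta mp) mp = n mp * n mp + t"
  proof -
    have "ract l N (fr_mult_basis l (l - 1) (l - 1)) (delta mp) mp
        = (\<Sum>y\<in>F. int (N X mp y) * int (N X y mp))"
      using A[OF XB XB, of mp] by (simp add: ract_def fr_mult_basis_def bact_delta B_def X_def)
    also have "\<dots> = (\<Sum>y\<in>F. n y * n y)" unfolding n_def by (simp add: sym[of X _ mp])
    also have "\<dots> = n mp * n mp + t" unfolding t_def using finF mpF by (simp add: sum.remove)
    finally show ?thesis .
  qed
  have "n mp * n mp + t \<le> 3"
    by (rule final_arith[OF _ nnn tnn ineq]) (simp add: W_def wnn)
  then show ?thesis
    using form_delta_right[of M "ract l N (fr_mult_basis l (l - 1) (l - 1)) (delta mp)" mp] target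
    by auto
qed

end
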